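(* Let $P(Y)\in R[Y]$ be an $m$-triangular polynomial of degree $d$ and $Q(Y)\in R[Y]$ an $n$-triangular polynomial of degree $e$. Then: (1) if $d=e$ and $m=n$, then $P(Y)+Q(Y)$ is $m$-triangular; (2) $P(Y)Q(Y)$ is $(m+n)$-triangular.
   Context: Fix a positive integer $a$ and variables $u_0,\ldots,u_a$. Let $R=\mathbb{C}[u_0,\ldots,u_{a-1}][u_a,u_a^{-1}]$. $\mathbb{Q}_+$ denotes the positive rational numbers. For an integer $m\ge1$, a polynomial $P(Y)=\sum_{l=0}^dp_lY^l\in R[Y]$ of degree $d\ge a$ is called $m$-triangular if for every $l$ with $d-a\le l\le d$ one has $p_l=q_lu_a^{m-1}u_{a-d+l}+P_l(u_{a-d+l+1},\ldots,u_a)$ for some $q_l\in\mathbb{Q}_+$ and some polynomial $P_l\in\mathbb{C}[u_{a-d+l+1},\ldots,u_a]$ (for $l=d$ this means $p_d=q_du_a^m$). *)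

theory Defs
  imports Complex_Main "HOL-Library.Poly_Mapping" "HOL-Computational_Algebra.Polynomial"
begin

text \<open>Laurent polynomials over the complex numbers in variables u_0, u_1, ...:
  finitely supported maps from integer exponent vectors (nat =>0 int) to complex.
  The ring R = C[u_0,...,u_(a-1)][u_a, u_a^-1] is the subring of those elements whose
  monomials only involve u_0..u_a, with nonnegative exponents of u_0..u_(a-1).\<close>

type_synonym monom = "nat \<Rightarrow>\<^sub>0 int"
type_synonym laurent = "monom \<Rightarrow>\<^sub>0 complex"

definition uvar :: "nat \<Rightarrow> laurent" where
  "uvar i = Poly_Mapping.single (Poly_Mapping.single i 1) 1"

definition cconst :: "complex \<Rightarrow> laurent" where
  "cconst c = Poly_Mapping.single 0 c"

definition in_R :: "nat \<Rightarrow> laurent \<Rightarrow> bool" where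
  "in_R a f \<longleftrightarrow> (\<forall>mo::monom. mo \<in> Poly_Mapping.keys f \<longrightarrow> Poly_Mapping.keys mo \<subseteq> {0..a} \<and> (\<forall>i<a. Poly_Mapping.lookup mo i \<ge> 0))"

definition in_poly_vars :: "nat set \<Rightarrow> laurent \<Rightarrow> bool" where
  "in_poly_vars S f \<longleftrightarrow> (\<forall>mo::monom. mo \<in> Poly_Mapping.keys f \<longrightarrow> Poly_Mapping.keys mo \<subseteq> S \<and> (\<forall>i. Poly_Mapping.lookup mo i \<ge> 0))"

text \<open>m-triangular polynomials in R[Y] (with a fixed). Index a-d+l is written l+a-d
  (well-defined in nat since l \<ge> d-a).\<close>
definition triangular :: "nat \<Rightarrow> nat \<Rightarrow> laurent poly \<Rightarrow> bool" where
  "triangular a m P \<longleftrightarrow>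
     m \<ge> 1 \<and> (\<forall>l. in_R a (coeff P l)) \<and> degree P \<ge> a \<and>
     (\<exists>q::rat. q > 0 \<and> coeff P (degree P) = cconst (of_rat q) * uvar a ^ m) \<and>
     (\<forall>l. degree P - a \<le> l \<and> l < degree P \<longrightarrow>
        (\<exists>q::rat. \<exists>Pl. q > 0 \<and> in_poly_vars {l + a - degree P + 1..a} Pl \<and>
           coeff P l = cconst (of_rat q) * uvar a ^ (m - 1) * uvar (l + a - degree P) + Pl))"

end

theory Submission imports Defs begin

definition G :: "nat set \<Rightarrow> nat set \<Rightarrow> laurent \<Rightarrow> bool" where
  "G S N f \<longleftrightarrow> (\<forall>mo \<in> Poly_Mapping.keys f. Poly_Mapping.keys mo \<subseteq> S \<and> (\<forall>i\<in>N. Poly_Mapping.lookup mo i \<ge> 0))"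

lemma inR_G: "in_R a f \<longleftrightarrow> G {0..a} {..<a} f"
  unfolding in_R_def G_def by auto

lemma ipv_G: "in_poly_vars S f \<longleftrightarrow> G S UNIV f"
  unfolding in_poly_vars_def G_def by auto

lemma G_0[simp]: "G S N 0" by (simp add: G_def)

lemma G_add: "G S N f \<Longrightarrow> G S N g \<Longrightarrow> G S N (f + g)"
proof -
  assume a: "G S N f" "G S N g"
  show ?thesis unfolding G_def
  proof
    fix mo assume "mo \<in> Poly_Mapping.keys (f + g)"
    then have "mo \<in> Poly_Mapping.keys f \<or> mo \<in> Poly_Mapping.keys g" using keys_add[of f g] by blast
    then show "Poly_Mapping.keys mo \<subseteq> S \<and> (\<forall>i\<in>N. 0 \<le> Poly_Mapping.lookup mo i)"
      using a unfolding G_def by auto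
  qed
qed

lemma G_mult: assumes "G S N f" "G S N g" shows "G S N (f * g)"
  unfolding G_def
proof
  fix mo assume "mo \<in> Poly_Mapping.keys (f * g)"
  then obtain x y where xy: "mo = x + y" "x \<in> Poly_Mapping.keys f" "y \<in> Poly_Mapping.keys g"
    using keys_mult[of f g] by blast
  have kx: "Poly_Mapping.keys x \<subseteq> S" "\<forall>i\<in>N. 0 \<le> Poly_Mapping.lookup x i"
    using assms(1) xy(2) unfolding G_def by auto
  have ky: "Poly_Mapping.keys y \<subseteq> S" "\<forall>i\<in>N. 0 \<le> Poly_Mapping.lookup y i"
    using assms(2) xy(3) unfolding G_def by auto
  have "Poly_Mapping.keys mo \<subseteq> S" using keys_add[of x y] kx(1) ky(1) xy(1) by blast
  moreover have "\<forall>i\<in>N. 0 \<le> Poly_Mapping.lookup mo i" using kx(2) ky(2) xy(1) by (simp add: lookup_add)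
  ultimately show "Poly_Mapping.keys mo \<subseteq> S \<and> (\<forall>i\<in>N. 0 \<le> Poly_Mapping.lookup mo i)" by blast
qed

lemma G_cconst[simp]: "G S N (cconst c)"
  by (simp add: G_def cconst_def)

lemma G_one[simp]: "G S N 1"
  by (simp add: G_def)

lemma G_uvar: "i \<in> S \<Longrightarrow> G S N (uvar i)"
  by (simp add: G_def uvar_def)

lemma G_pow: "G S N f \<Longrightarrow> G S N (f ^ k)"
  by (induction k) (auto intro: G_mult)

lemma G_sum: "(\<And>i. i \<in> A \<Longrightarrow> G S N (f i)) \<Longrightarrow> G S N (sum f A)"
  by (induction A rule: infinite_finite_induct) (auto intro: G_add)

lemma G_mono: "G S N f \<Longrightarrow> S \<subseteq> S' \<Longrightarrow> N' \<subseteq> N \<Longrightarrow> G S' N' f"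
  unfolding G_def by blast

lemma cconst_add: "cconst (x + y) = cconst x + cconst y"
  by (simp add: cconst_def single_add)
lemma cconst_mult: "cconst (x * y) = cconst x * cconst y"
  by (simp add: cconst_def mult_single)
lemma cconst_0[simp]: "cconst 0 = 0" by (simp add: cconst_def)
lemma cconst_sum: "cconst (sum f A) = (\<Sum>i\<in>A. cconst (f i))"
  by (induction A rule: infinite_finite_induct) (auto simp: cconst_add)

lemma uvar_pow: "uvar a ^ k = Poly_Mapping.single (Poly_Mapping.single a (int k)) 1"
  by (induction k) (auto simp: uvar_def mult_single single_add[symmetric] add.commute)

lemma lead_nz: "c \<noteq> 0 \<Longrightarrow> cconst c * uvar a ^ k \<noteq> 0"
  by (simp add: uvar_pow cconst_def mult_single) (metis lookup_single_eq lookup_zero)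


lemma tri_facts:
  assumes "triangular a m P"
  shows "m \<ge> 1" "\<And>l. G {0..a} {..<a} (coeff P l)" "degree P \<ge> a"
    "\<exists>q::rat. q > 0 \<and> coeff P (degree P) = cconst (of_rat q) * uvar a ^ m"
    "\<And>l. degree P - a \<le> l \<Longrightarrow> l < degree P \<Longrightarrow>
        (\<exists>q::rat. \<exists>Pl. q > 0 \<and> G {l + a - degree P + 1..a} UNIV Pl \<and>
           coeff P l = cconst (of_rat q) * uvar a ^ (m - 1) * uvar (l + a - degree P) + Pl)"
  using assms unfolding triangular_def inR_G ipv_G by blast+

lemma tri_mid:
  assumes "triangular a m P" "degree P - k < i" "i < degree P" "k \<le> a"
  shows "G {a+1-k..a} UNIV (coeff P i)"
proof -
  have da: "degree P \<ge> a" using tri_facts(3)[OF assms(1)] .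
  obtain q Pl where h: "G {i + a - degree P + 1..a} UNIV Pl"
     "coeff P i = cconst (of_rat q) * uvar a ^ (m - 1) * uvar (i + a - degree P) + Pl"
  proof -
    have "degree P - a \<le> i" using assms by linarith
    then show ?thesis using tri_facts(5)[OF assms(1), of i] assms(3) that by blast
  qed
  have sub: "{i + a - degree P + 1..a} \<subseteq> {a+1-k..a}" using assms da by auto
  have "i + a - degree P \<in> {a+1-k..a}" using assms da by auto
  moreover have "a \<in> {a+1-k..a}" using assms by auto
  ultimately show ?thesis unfolding h(2)
    by (intro G_add G_mult G_pow G_uvar G_cconst G_mono[OF h(1) sub]) auto
qed

lemma tri_low:
  assumes "triangular a m P" "1 \<le> k" "k \<le> a"
  shows "\<exists>q::rat. \<exists>T. q > 0 \<and> G {a+1-k..a} UNIV T \<and>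
     coeff P (degree P - k) = cconst (of_rat q) * uvar a ^ (m - 1) * uvar (a - k) + T"
proof -
  have da: "degree P \<ge> a" using tri_facts(3)[OF assms(1)] .
  have e1: "degree P - k + a - degree P = a - k" using assms da by auto
  have e2: "a - k + 1 = a + 1 - k" using assms by auto
  show ?thesis using tri_facts(5)[OF assms(1), of "degree P - k"] assms da
    unfolding e1 e2 by auto
qed


lemma term_lemma:
  assumes tP: "triangular a m P" and tQ: "triangular a n Q" and k: "1 \<le> k" "k \<le> a"
    and l: "l = degree P + degree Q - k" and i: "i \<le> l"
  shows "\<exists>r::rat. \<exists>T. r \<ge> 0 \<and> (i = degree P - k \<longrightarrow> r > 0) \<and> G {a+1-k..a} UNIV T \<and>
     coeff P i * coeff Q (l - i) = cconst (of_rat r) * (uvar a ^ (m+n-1) * uvar (a-k)) + T"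
proof -
  define d where "d = degree P"
  define e where "e = degree Q"
  define S where "S = {a+1-k..a}"
  define U where "U = uvar a ^ (m+n-1) * uvar (a-k)"
  have da: "d \<ge> a" "e \<ge> a" using tri_facts(3)[OF tP] tri_facts(3)[OF tQ] d_def e_def by auto
  have m1: "m \<ge> 1" "n \<ge> 1" using tri_facts(1)[OF tP] tri_facts(1)[OF tQ] by auto
  have aS: "a \<in> S" using k by (auto simp: S_def)
  show ?thesis
  proof (cases "i > d \<or> l - i > e")
    case True
    then have "coeff P i * coeff Q (l - i) = 0"
      by (auto simp: d_def e_def coeff_eq_0)
    moreover have "i \<noteq> d - k" using True l da k d_def e_def by auto
    ultimately show ?thesis by (intro exI[of _ 0] exI[of _ 0]) (auto simp: d_def)
  next
    case False
    then have ile: "i \<le> d" "l - i \<le> e" by auto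
    show ?thesis
    proof (cases "i = d - k")
      case True
      obtain q T where h: "q > 0" "G S UNIV T"
        "coeff P (d - k) = cconst (of_rat q) * uvar a ^ (m - 1) * uvar (a - k) + T"
        using tri_low[OF tP k] unfolding d_def S_def by blast
      obtain q' where h': "q' > 0" "coeff Q e = cconst (of_rat q') * uvar a ^ n"
        using tri_facts(4)[OF tQ] unfolding e_def by blast
      have lie: "l - i = e" using True l da k d_def e_def by auto
      have pw: "uvar a ^ (m - 1) * uvar a ^ n = uvar a ^ (m + n - 1)"
        using m1 by (simp add: power_add[symmetric])
      have "coeff P i * coeff Q (l - i) = cconst (of_rat (q * q')) * U + T * (cconst (of_rat q') * uvar a ^ n)"
        unfolding lie unfolding True h(3) h'(2) U_def of_rat_mult cconst_mult pw[symmetric]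
        by (simp add: algebra_simps)
      moreover have "G S UNIV (T * (cconst (of_rat q') * uvar a ^ n))"
        using h(2) aS by (intro G_mult G_pow G_uvar G_cconst) auto
      ultimately show ?thesis using h(1) h'(1) True
        by (intro exI[of _ "q * q'"] exI[of _ "T * (cconst (of_rat q') * uvar a ^ n)"]) (auto simp: S_def U_def d_def)
    next
      case nk: False
      show ?thesis
      proof (cases "i = d")
        case True
        obtain q T where h: "q > 0" "G S UNIV T"
          "coeff Q (e - k) = cconst (of_rat q) * uvar a ^ (n - 1) * uvar (a - k) + T"
          using tri_low[OF tQ k] unfolding e_def S_def by blast
        obtain q' where h': "q' > 0" "coeff P d = cconst (of_rat q') * uvar a ^ m"
          using tri_facts(4)[OF tP] unfolding d_def by blast
        have lie: "l - i = e - k" using True l da k d_def e_def by auto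
        have pw: "uvar a ^ m * uvar a ^ (n - 1) = uvar a ^ (m + n - 1)"
          using m1 by (simp add: power_add[symmetric])
        have "coeff P i * coeff Q (l - i) = cconst (of_rat (q' * q)) * U + (cconst (of_rat q') * uvar a ^ m) * T"
          unfolding lie unfolding True h(3) h'(2) U_def of_rat_mult cconst_mult pw[symmetric]
          by (simp add: algebra_simps)
        moreover have "G S UNIV ((cconst (of_rat q') * uvar a ^ m) * T)"
          using h(2) aS by (intro G_mult G_pow G_uvar G_cconst) auto
        ultimately show ?thesis using h(1) h'(1) nk
          by (intro exI[of _ "q' * q"] exI[of _ "(cconst (of_rat q') * uvar a ^ m) * T"]) (auto simp: S_def U_def d_def)
      next
        case nd: False
        have r1: "d - k < i" "i < d" using ile nd nk l i da k d_def e_def by auto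
        have r2: "e - k < l - i" "l - i < e" using ile nd nk l i da k d_def e_def by auto
        have "G S UNIV (coeff P i * coeff Q (l - i))"
          unfolding S_def
          by (intro G_mult tri_mid[OF tP] tri_mid[OF tQ]) (use r1 r2 k d_def e_def in auto)
        then show ?thesis using nk
          by (intro exI[of _ 0] exI[of _ "coeff P i * coeff Q (l - i)"]) (auto simp: S_def U_def d_def)
      qed
    qed
  qed
qed


lemma prod_mid:
  assumes tP: "triangular a m P" and tQ: "triangular a n Q" and k: "1 \<le> k" "k \<le> a"
    and l: "l = degree P + degree Q - k"
  shows "\<exists>q::rat. \<exists>T. q > 0 \<and> G {a+1-k..a} UNIV T \<and>
     coeff (P * Q) l = cconst (of_rat q) * uvar a ^ (m+n-1) * uvar (a-k) + T"
proof -
  define U where "U = uvar a ^ (m+n-1) * uvar (a-k)"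
  have "\<forall>i\<in>{..l}. \<exists>r::rat. \<exists>T. r \<ge> 0 \<and> (i = degree P - k \<longrightarrow> r > 0) \<and> G {a+1-k..a} UNIV T \<and>
     coeff P i * coeff Q (l - i) = cconst (of_rat r) * U + T"
    using term_lemma[OF tP tQ k l] unfolding U_def by blast
  then obtain r T where rT: "\<And>i. i \<in> {..l} \<Longrightarrow> r i \<ge> 0 \<and> (i = degree P - k \<longrightarrow> r i > 0) \<and> G {a+1-k..a} UNIV (T i) \<and>
     coeff P i * coeff Q (l - i) = cconst (of_rat (r i)) * U + T i"
    by metis
  have da: "degree Q \<ge> a" using tri_facts(3)[OF tQ] .
  have mem: "degree P - k \<in> {..l}" using l k da by auto
  have "coeff (P * Q) l = (\<Sum>i\<le>l. cconst (of_rat (r i)) * U + T i)"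
    unfolding coeff_mult using rT by (intro sum.cong) auto
  also have "\<dots> = cconst (of_rat (\<Sum>i\<le>l. r i)) * U + (\<Sum>i\<le>l. T i)"
    by (simp add: sum.distrib sum_distrib_right of_rat_sum cconst_sum)
  finally have eq: "coeff (P * Q) l = cconst (of_rat (\<Sum>i\<le>l. r i)) * U + (\<Sum>i\<le>l. T i)" .
  have pos: "(\<Sum>i\<le>l. r i) > 0"
    using mem rT by (intro sum_pos2[OF _ mem]) auto
  have "G {a+1-k..a} UNIV (\<Sum>i\<le>l. T i)" using rT by (intro G_sum) auto
  then show ?thesis using eq pos unfolding U_def by (metis mult.assoc)
qed


lemma prod_tri:
  assumes tP: "triangular a m P" and tQ: "triangular a n Q"
  shows "triangular a (m + n) (P * Q)"
proof -
  obtain q1 where q1: "q1 > 0" "coeff P (degree P) = cconst (of_rat q1) * uvar a ^ m"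
    using tri_facts(4)[OF tP] by blast
  obtain q2 where q2: "q2 > 0" "coeff Q (degree Q) = cconst (of_rat q2) * uvar a ^ n"
    using tri_facts(4)[OF tQ] by blast
  have lc: "coeff (P * Q) (degree P + degree Q) = cconst (of_rat (q1 * q2)) * uvar a ^ (m + n)"
    unfolding coeff_mult_degree_sum q1(2) q2(2) of_rat_mult cconst_mult power_add
    by (simp add: algebra_simps)
  have "cconst (of_rat (q1 * q2)) * uvar a ^ (m + n) \<noteq> 0"
    using q1 q2 by (intro lead_nz) simp
  then have "degree P + degree Q \<le> degree (P * Q)" using lc by (intro le_degree) simp
  then have D: "degree (P * Q) = degree P + degree Q" using degree_mult_le[of P Q] by linarith
  have da: "degree P \<ge> a" using tri_facts(3)[OF tP] .
  have m1: "m \<ge> 1" using tri_facts(1)[OF tP] .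
  show ?thesis unfolding triangular_def inR_G ipv_G D
  proof (intro conjI allI impI)
    show "1 \<le> m + n" using m1 by simp
    show "a \<le> degree P + degree Q" using da by simp
    show "\<exists>q. 0 < q \<and> coeff (P * Q) (degree P + degree Q) = cconst (of_rat q) * uvar a ^ (m + n)"
      using lc q1 q2 by (intro exI[of _ "q1*q2"]) auto
  next
    fix l
    show "G {0..a} {..<a} (coeff (P * Q) l)" unfolding coeff_mult
      using tri_facts(2)[OF tP] tri_facts(2)[OF tQ] by (intro G_sum G_mult) auto
  next
    fix l assume h: "degree P + degree Q - a \<le> l \<and> l < degree P + degree Q"
    define k where "k = degree P + degree Q - l"
    have k: "1 \<le> k" "k \<le> a" "l = degree P + degree Q - k" using h k_def da by auto
    have e1: "l + a - (degree P + degree Q) = a - k" using k h da by auto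
    have e2: "a - k + 1 = a + 1 - k" using k by auto
    show "\<exists>q Pl. 0 < q \<and> G {l + a - (degree P + degree Q) + 1..a} UNIV Pl \<and>
          coeff (P * Q) l = cconst (of_rat q) * uvar a ^ (m + n - 1) * uvar (l + a - (degree P + degree Q)) + Pl"
      unfolding e1 e2 using prod_mid[OF tP tQ k] by blast
  qed
qed

lemma sum_tri:
  assumes tP: "triangular a m P" and tQ: "triangular a m Q" and dd: "degree P = degree Q"
  shows "triangular a m (P + Q)"
proof -
  obtain q1 where q1: "q1 > 0" "coeff P (degree P) = cconst (of_rat q1) * uvar a ^ m"
    using tri_facts(4)[OF tP] by blast
  obtain q2 where q2: "q2 > 0" "coeff Q (degree Q) = cconst (of_rat q2) * uvar a ^ m"
    using tri_facts(4)[OF tQ] by blast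
  have lc: "coeff (P + Q) (degree P) = cconst (of_rat (q1 + q2)) * uvar a ^ m"
    using q1(2) q2(2) dd by (simp add: of_rat_add cconst_add algebra_simps)
  have "cconst (of_rat (q1 + q2)) * uvar a ^ m \<noteq> 0"
    using q1 q2 by (intro lead_nz) simp
  then have "degree P \<le> degree (P + Q)" using lc by (intro le_degree) simp
  then have D: "degree (P + Q) = degree P" using degree_add_le_max[of P Q] dd by linarith
  have da: "degree P \<ge> a" using tri_facts(3)[OF tP] .
  have m1: "m \<ge> 1" using tri_facts(1)[OF tP] .
  show ?thesis unfolding triangular_def inR_G ipv_G D
  proof (intro conjI allI impI)
    show "1 \<le> m" using m1 by simp
    show "a \<le> degree P" using da by simp
    show "\<exists>q. 0 < q \<and> coeff (P + Q) (degree P) = cconst (of_rat q) * uvar a ^ m"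
      using lc q1 q2 by (intro exI[of _ "q1+q2"]) auto
  next
    fix l
    show "G {0..a} {..<a} (coeff (P + Q) l)"
      using tri_facts(2)[OF tP] tri_facts(2)[OF tQ] by (simp add: G_add)
  next
    fix l assume h: "degree P - a \<le> l \<and> l < degree P"
    obtain r1 T1 where a1: "r1 > 0" "G {l + a - degree P + 1..a} UNIV T1"
      "coeff P l = cconst (of_rat r1) * uvar a ^ (m - 1) * uvar (l + a - degree P) + T1"
      using tri_facts(5)[OF tP, of l] h by blast
    obtain r2 T2 where a2: "r2 > 0" "G {l + a - degree P + 1..a} UNIV T2"
      "coeff Q l = cconst (of_rat r2) * uvar a ^ (m - 1) * uvar (l + a - degree P) + T2"
      using tri_facts(5)[OF tQ, of l] h dd by auto
    have "coeff (P + Q) l = cconst (of_rat (r1 + r2)) * uvar a ^ (m - 1) * uvar (l + a - degree P) + (T1 + T2)"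
      using a1(3) a2(3) by (simp add: of_rat_add cconst_add algebra_simps)
    then show "\<exists>q Pl. 0 < q \<and> G {l + a - degree P + 1..a} UNIV Pl \<and>
          coeff (P + Q) l = cconst (of_rat q) * uvar a ^ (m - 1) * uvar (l + a - degree P) + Pl"
      using a1 a2 G_add by (intro exI[of _ "r1+r2"] exI[of _ "T1+T2"]) auto
  qed
qed

theorem mainTheorem3:
  fixes a m n :: nat and P Q :: "laurent poly"
  assumes "a > 0" and "m \<ge> 1" and "n \<ge> 1"
    and "triangular a m P" and "triangular a n Q"
  shows "(degree P = degree Q \<and> m = n \<longrightarrow> triangular a m (P + Q))
         \<and> triangular a (m + n) (P * Q)"
  using sum_tri[OF assms(4)] prod_tri[OF assms(4,5)] assms(5) by blast

end
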